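(* Let $\mathcal{W}=\{\mathbb{R}^d; f_1,\dots,f_N; p_1,\dots,p_N\}$ be a weighted IFS, $N\ge2$, with all $p_i>0$, $\sum_i p_i=1$, such that each $f_i$ satisfies $s_i\|x-y\|\le\|f_i(x)-f_i(y)\|\le c_i\|x-y\|$ for all $x,y\in\mathbb{R}^d$, where $0<s_i\le c_i<1$ (no separation condition is assumed). Let $\mu$ be its invariant Borel probability measure, let $r\in(0,\infty)$, and let $l_r\in(0,\infty)$ be the unique number with $\sum_{i=1}^N(p_ic_i^r)^{\frac{l_r}{r+l_r}}=1$. Then $$\limsup_{n\to\infty} n\cdot e_{n,r}(\mu)^{l_r}<\infty,$$ and consequently $\overline{D}_r(\mu)\le l_r$.
   Context: $\|\cdot\|$ is the Euclidean norm. The invariant measure of the weighted IFS is the unique Borel probability measure $\mu$ with $\mu=\sum_{i=1}^N p_i\,\mu\circ f_i^{-1}$. For a Borel probability measure $\mu$ on $\mathbb{R}^d$, $r>0$, $n\in\mathbb{N}$: $V_{n,r}(\mu)=\inf\{\int\operatorname{dist}(x,B)^r d\mu(x): B\subset\mathbb{R}^d,\ \operatorname{card}(B)\le n\}$, $e_{n,r}(\mu)=V_{n,r}(\mu)^{1/r}$, and $\overline{D}_r(\mu)=\limsup_{n\to\infty}\frac{\log n}{-\log e_{n,r}(\mu)}$. *)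

theory Defs
  imports "HOL-Probability.Probability"
begin

text \<open>Nonempty because dist(x,{}) is +infinity in the paper's convention
  (whereas infdist x {} = 0 in Isabelle).\<close>
definition quant_V :: "'a::euclidean_space measure \<Rightarrow> real \<Rightarrow> nat \<Rightarrow> ennreal" where
  "quant_V \<mu> r n = (INF B\<in>{B. finite B \<and> B \<noteq> {} \<and> card B \<le> n}.
      \<integral>\<^sup>+ x. ennreal (infdist x B powr r) \<partial>\<mu>)"

definition quant_e :: "'a::euclidean_space measure \<Rightarrow> real \<Rightarrow> nat \<Rightarrow> real" where
  "quant_e \<mu> r n = enn2real (quant_V \<mu> r n) powr (1 / r)"

definition upper_quant_dim :: "'a::euclidean_space measure \<Rightarrow> real \<Rightarrow> ereal" where
  "upper_quant_dim \<mu> r =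
     limsup (\<lambda>n. ereal (ln (real n) / (- ln (quant_e \<mu> r n))))"

end

theory Submission
  imports Defs
begin

locale ifs =
  fixes f :: "nat \<Rightarrow> 'a::euclidean_space \<Rightarrow> 'a" and p c :: "nat \<Rightarrow> real"
    and N :: nat and \<mu> :: "'a measure"
  assumes N: "N \<ge> 2"
    and p_pos: "\<And>i. i < N \<Longrightarrow> p i > 0"
    and p_sum: "(\<Sum>i<N. p i) = 1"
    and c: "\<And>i. i < N \<Longrightarrow> 0 < c i \<and> c i < 1"
    and lip: "\<And>i x y. i < N \<Longrightarrow> norm (f i x - f i y) \<le> c i * norm (x - y)"
    and mu_borel: "sets \<mu> = sets borel"
    and mu_prob: "prob_space \<mu>"
    and mu_inv: "\<And>A. A \<in> sets borel \<Longrightarrow>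
        emeasure \<mu> A = (\<Sum>i<N. ennreal (p i) * emeasure \<mu> (f i -` A))"
begin

lemma space_mu: "space \<mu> = UNIV"
  using mu_borel sets_eq_imp_space_eq by fastforce

lemma f_cont: "i < N \<Longrightarrow> continuous_on UNIV (f i)"
  apply (rule lipschitz_on_continuous_on[of "c i"])
  apply (rule lipschitz_onI)
  using lip c by (auto simp: dist_norm less_imp_le)

lemma f_meas: "i < N \<Longrightarrow> f i \<in> measurable \<mu> \<mu>"
  using f_cont borel_measurable_continuous_onI measurable_cong_sets[OF mu_borel mu_borel]
  by blast

lemma f_meas_borel: "i < N \<Longrightarrow> g \<in> borel_measurable \<mu> \<Longrightarrow> (\<lambda>x. g (f i x)) \<in> borel_measurable \<mu>"
  using measurable_compose[OF f_meas] by blast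

lemma int_inv:
  fixes g :: "'a \<Rightarrow> ennreal"
  assumes g: "g \<in> borel_measurable \<mu>"
  shows "(\<integral>\<^sup>+x. g x \<partial>\<mu>) = (\<Sum>i<N. ennreal (p i) * (\<integral>\<^sup>+x. g (f i x) \<partial>\<mu>))"
  using g
proof (induction rule: borel_measurable_induct)
  case (cong f1 g1)
  then have "f1 = g1" using space_mu by auto
  then show ?case using cong by simp
next
  case (set A)
  have "(\<integral>\<^sup>+x. indicator A x \<partial>\<mu>) = emeasure \<mu> A" using set by simp
  also have "\<dots> = (\<Sum>i<N. ennreal (p i) * emeasure \<mu> (f i -` A))"
    using mu_inv set mu_borel by simp
  also have "\<dots> = (\<Sum>i<N. ennreal (p i) * (\<integral>\<^sup>+x. indicator A (f i x) \<partial>\<mu>))"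
  proof (rule sum.cong[OF refl])
    fix i assume "i \<in> {..<N}"
    then have "f i -` A \<in> sets \<mu>"
      using f_meas[of i] set measurable_sets[of "f i" \<mu> \<mu> A] space_mu by auto
    moreover have "(\<lambda>x. indicator A (f i x) :: ennreal) = indicator (f i -` A)"
      by (auto simp: indicator_def)
    ultimately show "ennreal (p i) * emeasure \<mu> (f i -` A) = ennreal (p i) * (\<integral>\<^sup>+x. indicator A (f i x) \<partial>\<mu>)"
      by simp
  qed
  finally show ?case .
next
  case (mult u k)
  have "(\<integral>\<^sup>+x. k * u x \<partial>\<mu>) = k * (\<integral>\<^sup>+x. u x \<partial>\<mu>)"
    using mult by (simp add: nn_integral_cmult)
  also have "\<dots> = (\<Sum>i<N. k * (ennreal (p i) * (\<integral>\<^sup>+x. u (f i x) \<partial>\<mu>)))"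
    using mult by (simp add: sum_distrib_left)
  also have "\<dots> = (\<Sum>i<N. ennreal (p i) * (\<integral>\<^sup>+x. k * u (f i x) \<partial>\<mu>))"
  proof (rule sum.cong[OF refl])
    fix i assume "i \<in> {..<N}"
    then have "(\<integral>\<^sup>+x. k * u (f i x) \<partial>\<mu>) = k * (\<integral>\<^sup>+x. u (f i x) \<partial>\<mu>)"
      using mult f_meas_borel[of i u] by (intro nn_integral_cmult) auto
    then show "k * (ennreal (p i) * (\<integral>\<^sup>+x. u (f i x) \<partial>\<mu>)) = ennreal (p i) * (\<integral>\<^sup>+x. k * u (f i x) \<partial>\<mu>)"
      by (simp add: mult.left_commute)
  qed
  finally show ?case .
next
  case (add u v)
  have "(\<integral>\<^sup>+x. v x + u x \<partial>\<mu>) = (\<integral>\<^sup>+x. v x \<partial>\<mu>) + (\<integral>\<^sup>+x. u x \<partial>\<mu>)"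
    using add by (simp add: nn_integral_add)
  also have "\<dots> = (\<Sum>i<N. ennreal (p i) * (\<integral>\<^sup>+x. v (f i x) + u (f i x) \<partial>\<mu>))"
  proof -
    have "\<And>i. i < N \<Longrightarrow> (\<integral>\<^sup>+x. v (f i x) + u (f i x) \<partial>\<mu>) = (\<integral>\<^sup>+x. v (f i x) \<partial>\<mu>) + (\<integral>\<^sup>+x. u (f i x) \<partial>\<mu>)"
      using add by (intro nn_integral_add f_meas_borel) auto
    then show ?thesis using add by (simp add: sum.distrib distrib_left)
  qed
  finally show ?case .
next
  case (seq U)
  have "(\<integral>\<^sup>+x. (SUP n. U n) x \<partial>\<mu>) = (\<integral>\<^sup>+x. (SUP n. U n x) \<partial>\<mu>)"
    by (simp add: SUP_apply image_comp)
  also have "\<dots> = (SUP n. \<integral>\<^sup>+x. U n x \<partial>\<mu>)"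
    using seq by (intro nn_integral_monotone_convergence_SUP) auto
  also have "\<dots> = (SUP n. \<Sum>i<N. ennreal (p i) * (\<integral>\<^sup>+x. U n (f i x) \<partial>\<mu>))"
    using seq by simp
  also have "\<dots> = (\<Sum>i<N. SUP n. ennreal (p i) * (\<integral>\<^sup>+x. U n (f i x) \<partial>\<mu>))"
  proof (rule ennreal_SUP_sum)
    fix i assume "i \<in> {..<N}"
    show "incseq (\<lambda>n. ennreal (p i) * (\<integral>\<^sup>+x. U n (f i x) \<partial>\<mu>))"
      using \<open>incseq U\<close> unfolding incseq_def le_fun_def
      by (auto intro!: mult_left_mono nn_integral_mono)
  qed
  also have "\<dots> = (\<Sum>i<N. ennreal (p i) * (\<integral>\<^sup>+x. (SUP n. U n) (f i x) \<partial>\<mu>))"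
  proof (rule sum.cong[OF refl])
    fix i assume i: "i \<in> {..<N}"
    have inc: "incseq (\<lambda>n x. U n (f i x))"
      using \<open>incseq U\<close> unfolding incseq_def le_fun_def by auto
    have "(\<integral>\<^sup>+x. (SUP n. U n) (f i x) \<partial>\<mu>) = (\<integral>\<^sup>+x. (SUP n. U n (f i x)) \<partial>\<mu>)"
      by (simp add: SUP_apply image_comp)
    also have "\<dots> = (SUP n. \<integral>\<^sup>+x. U n (f i x) \<partial>\<mu>)"
      using seq(1) i by (intro nn_integral_monotone_convergence_SUP[OF inc] f_meas_borel) auto
    finally show "(SUP n. ennreal (p i) * (\<integral>\<^sup>+x. U n (f i x) \<partial>\<mu>)) =
        ennreal (p i) * (\<integral>\<^sup>+x. (SUP n. U n) (f i x) \<partial>\<mu>)"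
      by (simp add: SUP_mult_left_ennreal)
  qed
  finally show ?case .
qed

lemma N_pos: "0 < N" using N by simp

interpretation P: prob_space \<mu> by (rule mu_prob)

lemma sets_mu_open: "open S \<Longrightarrow> S \<in> sets \<mu>"
  using mu_borel by simp

lemma support: "\<exists>R>0. AE x in \<mu>. norm x \<le> R"
proof -
  define c0 where "c0 = Max (c ` {..<N})"
  define b where "b = Max ((\<lambda>i. norm (f i 0)) ` {..<N})"
  have ne: "{..<N} \<noteq> {}" using N_pos by auto
  have c0: "0 < c0" "c0 < 1"
    using c N_pos ne unfolding c0_def by (auto simp: Max_gr_iff Max_less_iff)
  have ci: "\<And>i. i < N \<Longrightarrow> c i \<le> c0" unfolding c0_def by auto
  have bi: "\<And>i. i < N \<Longrightarrow> norm (f i 0) \<le> b" unfolding b_def by auto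
  have b0: "0 \<le> b" using bi[of 0] N_pos by (meson norm_ge_zero order_trans)
  have nf: "norm (f i x) \<le> c0 * norm x + b" if i: "i < N" for i x
  proof -
    have "norm (f i x) \<le> norm (f i x - f i 0) + norm (f i 0)"
      by (metis diff_add_cancel norm_triangle_ineq)
    also have "\<dots> \<le> c i * norm x + b" using lip[OF i, of x 0] bi[OF i] by simp
    also have "\<dots> \<le> c0 * norm x + b" using ci[OF i] by (simp add: mult_right_mono)
    finally show ?thesis .
  qed
  define A where "A t = {x::'a. t < norm x}" for t
  have A_sets: "A t \<in> sets \<mu>" for t
    unfolding A_def by (intro sets_mu_open open_Collect_less continuous_intros)
  have A_mono: "s \<le> t \<Longrightarrow> emeasure \<mu> (A t) \<le> emeasure \<mu> (A s)" for s t
    by (intro emeasure_mono A_sets) (auto simp: A_def)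
  define \<phi> where "\<phi> t = (t - b) / c0" for t
  have pre: "f i -` A t \<subseteq> A (\<phi> t)" if i: "i < N" for i t
  proof
    fix x assume "x \<in> f i -` A t"
    then have "t < c0 * norm x + b" using nf[OF i, of x] by (auto simp: A_def)
    then show "x \<in> A (\<phi> t)" using c0 by (auto simp: A_def \<phi>_def pos_divide_less_eq mult.commute)
  qed
  have psum: "(\<Sum>i<N. ennreal (p i)) = 1"
    using p_pos p_sum by (subst sum_ennreal) (auto intro: less_imp_le)
  have step: "emeasure \<mu> (A t) \<le> emeasure \<mu> (A (\<phi> t))" for t
  proof -
    have "emeasure \<mu> (A t) = (\<Sum>i<N. ennreal (p i) * emeasure \<mu> (f i -` A t))"
      using mu_inv A_sets mu_borel by simp
    also have "\<dots> \<le> (\<Sum>i<N. ennreal (p i) * emeasure \<mu> (A (\<phi> t)))"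
      using pre A_sets by (intro sum_mono mult_left_mono emeasure_mono) auto
    also have "\<dots> = emeasure \<mu> (A (\<phi> t))"
      by (simp add: sum_distrib_right[symmetric] psum)
    finally show ?thesis .
  qed
  define R0 where "R0 = b / (1 - c0) + 1"
  define \<delta> where "\<delta> = (1 - c0) / c0"
  have R0: "0 < R0" using b0 c0 unfolding R0_def
    by (metis add_nonneg_pos diff_gt_0_iff_gt divide_nonneg_pos zero_less_one)
  have \<delta>: "0 < \<delta>" using c0 by (simp add: \<delta>_def)
  have phi_ge: "t + \<delta> \<le> \<phi> t" if t: "R0 \<le> t" for t
  proof -
    have "R0 * (1 - c0) \<le> t * (1 - c0)" using t c0 by (intro mult_right_mono) auto
    moreover have "R0 * (1 - c0) = b + (1 - c0)" unfolding R0_def using c0 by (simp add: field_simps)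
    ultimately have "c0 * t + (1 - c0) \<le> t - b" by (simp add: algebra_simps)
    then have "(c0 * t + (1 - c0)) / c0 \<le> (t - b) / c0" using c0 by (intro divide_right_mono) auto
    moreover have "(c0 * t + (1 - c0)) / c0 = t + \<delta>" using c0 by (simp add: \<delta>_def field_simps)
    ultimately show ?thesis by (simp add: \<phi>_def)
  qed
  have claim: "\<forall>t\<ge>R0. emeasure \<mu> (A t) \<le> emeasure \<mu> (A (t + real n * \<delta>))" for n
  proof (induction n)
    case 0 then show ?case by simp
  next
    case (Suc n)
    show ?case
    proof (intro allI impI)
      fix t assume t: "R0 \<le> t"
      have "emeasure \<mu> (A t) \<le> emeasure \<mu> (A (\<phi> t))" by (rule step)
      also have "\<dots> \<le> emeasure \<mu> (A (\<phi> t + real n * \<delta>))"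
        using Suc phi_ge[OF t] t \<delta> by auto
      also have "\<dots> \<le> emeasure \<mu> (A (t + real (Suc n) * \<delta>))"
        using phi_ge[OF t] by (intro A_mono) (simp add: algebra_simps)
      finally show "emeasure \<mu> (A t) \<le> emeasure \<mu> (A (t + real (Suc n) * \<delta>))" .
    qed
  qed
  define B where "B n = A (R0 + real n * \<delta>)" for n
  have lim: "(\<lambda>n. emeasure \<mu> (B n)) \<longlonglongrightarrow> emeasure \<mu> (\<Inter>(range B))"
  proof (rule Lim_emeasure_decseq)
    show "range B \<subseteq> sets \<mu>" using A_sets by (auto simp: B_def)
    show "antimono_on UNIV B" unfolding monotone_on_def B_def A_def
    proof (clarsimp)
      fix x y :: nat and z :: 'a assume "x \<le> y" "R0 + real y * \<delta> < norm z"
      moreover have "real x * \<delta> \<le> real y * \<delta>" using \<delta> \<open>x \<le> y\<close> by (intro mult_right_mono) auto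
      ultimately show "R0 + real x * \<delta> < norm z" by linarith
    qed
    show "\<And>i. emeasure \<mu> (B i) \<noteq> \<infinity>" by (simp add: P.emeasure_eq_measure)
  qed
  have empty: "\<Inter>(range B) = {}"
  proof (rule ccontr)
    assume "\<Inter>(range B) \<noteq> {}"
    then obtain x :: 'a where x: "\<forall>n. R0 + real n * \<delta> < norm x" by (auto simp: B_def A_def)
    obtain n where "norm x / \<delta> < real n" using reals_Archimedean2 by blast
    then have "norm x < real n * \<delta>" using \<delta> by (simp add: pos_divide_less_eq)
    with x[rule_format, of n] R0 show False by simp
  qed
  have "emeasure \<mu> (A R0) \<le> 0"
    using lim unfolding empty
    by (intro LIMSEQ_le_const[of _ 0]) (use claim in \<open>auto simp: B_def\<close>)
  then have "A R0 \<in> null_sets \<mu>" using A_sets by (auto intro: null_setsI)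
  then have "AE x in \<mu>. norm x \<le> R0"
    by (rule AE_I') (auto simp: A_def)
  then show ?thesis using R0 by blast
qed

lemma infdist_f:
  assumes i: "i < N" and B: "finite B" "B \<noteq> {}"
  shows "infdist (f i x) (f i ` B) \<le> c i * infdist x B"
proof -
  have ci: "0 < c i" using c i by auto
  have "infdist (f i x) (f i ` B) / c i \<le> (INF a\<in>B. dist x a)"
  proof (rule cINF_greatest[OF B(2)])
    fix a assume a: "a \<in> B"
    have "infdist (f i x) (f i ` B) \<le> dist (f i x) (f i a)" using a by (intro infdist_le) auto
    also have "\<dots> \<le> c i * dist x a" using lip[OF i, of x a] by (simp add: dist_norm)
    finally show "infdist (f i x) (f i ` B) / c i \<le> dist x a" using ci by (simp add: divide_le_eq mult.commute)
  qed
  then show ?thesis using ci B by (simp add: infdist_notempty divide_le_eq mult.commute)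
qed

lemma infdist_meas: "(\<lambda>x. ennreal (infdist x B powr r)) \<in> borel_measurable \<mu>"
proof -
  have "(\<lambda>x. infdist x B) \<in> borel_measurable borel"
    by (intro borel_measurable_continuous_onI continuous_intros)
  then have "(\<lambda>x. infdist x B) \<in> borel_measurable \<mu>"
    using measurable_cong_sets[OF mu_borel refl] by blast
  then show ?thesis by measurable
qed

lemma cost:
  fixes Bs :: "nat \<Rightarrow> 'a set" and r :: real
  assumes r: "0 < r" and Bs: "\<And>i. i < N \<Longrightarrow> finite (Bs i) \<and> Bs i \<noteq> {}"
  shows "(\<integral>\<^sup>+x. ennreal (infdist x (\<Union>i<N. f i ` Bs i) powr r) \<partial>\<mu>)
     \<le> (\<Sum>i<N. ennreal (p i * c i powr r) * (\<integral>\<^sup>+x. ennreal (infdist x (Bs i) powr r) \<partial>\<mu>))"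
proof -
  define B where "B = (\<Union>i<N. f i ` Bs i)"
  have "(\<integral>\<^sup>+x. ennreal (infdist x B powr r) \<partial>\<mu>)
      = (\<Sum>i<N. ennreal (p i) * (\<integral>\<^sup>+x. ennreal (infdist (f i x) B powr r) \<partial>\<mu>))"
    by (rule int_inv[OF infdist_meas])
  also have "\<dots> \<le> (\<Sum>i<N. ennreal (p i * c i powr r) * (\<integral>\<^sup>+x. ennreal (infdist x (Bs i) powr r) \<partial>\<mu>))"
  proof (rule sum_mono)
    fix i assume "i \<in> {..<N}"
    then have i: "i < N" by simp
    have ci: "0 < c i" using c i by auto
    have pw: "ennreal (infdist (f i x) B powr r) \<le> ennreal (c i powr r) * ennreal (infdist x (Bs i) powr r)" for x
    proof -
      have "infdist (f i x) B \<le> infdist (f i x) (f i ` Bs i)"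
        using Bs[OF i] i by (intro infdist_mono) (auto simp: B_def)
      also have "\<dots> \<le> c i * infdist x (Bs i)" using Bs[OF i] i by (intro infdist_f) auto
      finally have "infdist (f i x) B powr r \<le> (c i * infdist x (Bs i)) powr r"
        using r by (intro powr_mono2) (auto simp: infdist_nonneg)
      also have "\<dots> = c i powr r * infdist x (Bs i) powr r"
        using ci by (simp add: powr_mult infdist_nonneg)
      finally show ?thesis by (simp add: ennreal_mult[symmetric])
    qed
    have "(\<integral>\<^sup>+x. ennreal (infdist (f i x) B powr r) \<partial>\<mu>)
        \<le> (\<integral>\<^sup>+x. ennreal (c i powr r) * ennreal (infdist x (Bs i) powr r) \<partial>\<mu>)"
      by (intro nn_integral_mono pw)
    also have "\<dots> = ennreal (c i powr r) * (\<integral>\<^sup>+x. ennreal (infdist x (Bs i) powr r) \<partial>\<mu>)"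
      by (intro nn_integral_cmult infdist_meas)
    finally show "ennreal (p i) * (\<integral>\<^sup>+x. ennreal (infdist (f i x) B powr r) \<partial>\<mu>)
        \<le> ennreal (p i * c i powr r) * (\<integral>\<^sup>+x. ennreal (infdist x (Bs i) powr r) \<partial>\<mu>)"
      using p_pos[OF i] by (simp add: ennreal_mult mult.assoc mult_left_mono)
  qed
  finally show ?thesis by (simp add: B_def)
qed

lemma covering:
  assumes r: "0 < r" and l: "0 < l"
    and l_eq: "(\<Sum>i<N. (p i * c i powr r) powr (l / (r + l))) = 1"
  shows "\<exists>M\<ge>0. \<exists>m>0. \<forall>\<epsilon>. 0 < \<epsilon> \<and> \<epsilon> \<le> 1 \<longrightarrow> (\<exists>B. finite B \<and> B \<noteq> {} \<and>
      real (card B) \<le> 1 / (\<epsilon> * m) \<and>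
      (\<integral>\<^sup>+x. ennreal (infdist x B powr r) \<partial>\<mu>) \<le> ennreal (M * \<epsilon> powr (r / l)))"
proof -
  obtain R where R: "R > 0" "AE x in \<mu>. norm x \<le> R" using support by blast
  define M where "M = R powr r"
  have M: "0 \<le> M" by (simp add: M_def)
  have leaf: "(\<integral>\<^sup>+x. ennreal (infdist x {0} powr r) \<partial>\<mu>) \<le> ennreal M"
  proof -
    have "(\<integral>\<^sup>+x. ennreal (infdist x {0} powr r) \<partial>\<mu>) \<le> (\<integral>\<^sup>+x. ennreal M \<partial>\<mu>)"
    proof (rule nn_integral_mono_AE)
      show "AE x in \<mu>. ennreal (infdist x {0} powr r) \<le> ennreal M"
        using R(2) by eventually_elim (use r in \<open>auto simp: M_def intro!: powr_mono2\<close>)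
    qed
    also have "\<dots> = ennreal M" by (simp add: P.emeasure_space_1)
    finally show ?thesis .
  qed
  define k where "k = l / (r + l)"
  have k: "0 < k" using r l by (simp add: k_def)
  define a where "a i = (p i * c i powr r) powr k" for i
  have pc_pos: "0 < p i * c i powr r" if "i < N" for i using p_pos[OF that] c[OF that] by simp
  have a_pos: "0 < a i" if "i < N" for i using pc_pos[OF that] unfolding a_def by (subst powr_gt_zero) linarith
  have a_sum: "(\<Sum>i<N. a i) = 1" using l_eq by (simp add: a_def k_def)
  have a_lt1: "a i < 1" if i: "i < N" for i
  proof -
    obtain j where j: "j < N" "j \<noteq> i"
    proof (cases "i = 0")
      case True then show ?thesis using N by (intro that[of 1]) auto
    next
      case False then show ?thesis using N by (intro that[of 0]) auto
    qed
    have "(\<Sum>x\<in>{i,j}. a x) \<le> (\<Sum>i<N. a i)"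
      using i j a_pos by (intro sum_mono2) (auto intro: less_imp_le)
    then show ?thesis using a_sum j a_pos[of j] by simp
  qed
  have pc: "p i * c i powr r = a i * a i powr (r / l)" if i: "i < N" for i
  proof -
    have "a i * a i powr (r / l) = a i powr (1 + r / l)"
      using a_pos[OF i] by (simp add: powr_add)
    also have "1 + r / l = 1 / k" using l r by (simp add: k_def field_simps)
    also have "a i powr (1 / k) = p i * c i powr r"
      unfolding a_def using k pc_pos[OF i] by (simp add: powr_powr)
    finally show ?thesis by simp
  qed
  define m where "m = Min (a ` {..<N})"
  define q where "q = Max (a ` {..<N})"
  have ne: "{..<N} \<noteq> {}" using N_pos by auto
  have m: "0 < m" using a_pos ne by (simp add: m_def)
  have q: "q < 1" "0 < q" using a_lt1 a_pos ne N by (auto simp: q_def Max_less_iff Max_gr_iff)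
  have mi: "i < N \<Longrightarrow> m \<le> a i" for i by (simp add: m_def)
  have qi: "i < N \<Longrightarrow> a i \<le> q" for i by (simp add: q_def)
  define Q where "Q \<epsilon> \<longleftrightarrow> (\<exists>B. finite B \<and> B \<noteq> {} \<and> real (card B) \<le> 1 / (\<epsilon> * m) \<and>
      (\<integral>\<^sup>+x. ennreal (infdist x B powr r) \<partial>\<mu>) \<le> ennreal (M * \<epsilon> powr (r / l)))" for \<epsilon>
  have step: "Q \<epsilon>" if e: "0 < \<epsilon>" "\<epsilon> \<le> 1" and H: "\<And>i. i < N \<Longrightarrow> \<epsilon> \<le> a i \<Longrightarrow> Q (\<epsilon> / a i)" for \<epsilon>
  proof -
    have ex: "\<exists>Bi. finite Bi \<and> Bi \<noteq> {} \<and> real (card Bi) \<le> a i / (\<epsilon> * m) \<and>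
        ennreal (p i * c i powr r) * (\<integral>\<^sup>+x. ennreal (infdist x Bi powr r) \<partial>\<mu>)
          \<le> ennreal (a i * (M * \<epsilon> powr (r / l)))" if i: "i < N" for i
    proof (cases "\<epsilon> \<le> a i")
      case True
      from H[OF i True] obtain Bi where Bi: "finite Bi" "Bi \<noteq> {}"
        "real (card Bi) \<le> 1 / (\<epsilon> / a i * m)"
        "(\<integral>\<^sup>+x. ennreal (infdist x Bi powr r) \<partial>\<mu>) \<le> ennreal (M * (\<epsilon> / a i) powr (r / l))"
        unfolding Q_def by blast
      have ai: "0 < a i" using a_pos[OF i] .
      have cd: "real (card Bi) \<le> a i / (\<epsilon> * m)" using Bi(3) by simp
      have "ennreal (p i * c i powr r) * (\<integral>\<^sup>+x. ennreal (infdist x Bi powr r) \<partial>\<mu>)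
          \<le> ennreal (p i * c i powr r) * ennreal (M * (\<epsilon> / a i) powr (r / l))"
        by (intro mult_left_mono Bi(4)) auto
      also have "\<dots> = ennreal (p i * c i powr r * (M * (\<epsilon> / a i) powr (r / l)))"
        using pc_pos[OF i] M by (simp add: ennreal_mult)
      also have "p i * c i powr r * (M * (\<epsilon> / a i) powr (r / l)) = a i * (M * \<epsilon> powr (r / l))"
        using ai e by (simp add: pc[OF i] powr_divide)
      finally show ?thesis using Bi(1,2) cd by blast
    next
      case False
      have ai: "0 < a i" using a_pos[OF i] .
      have "\<epsilon> * m \<le> a i" using mi[OF i] e m
        using mult_right_mono[of \<epsilon> 1 m] by linarith
      then have c1: "real (card {0::'a}) \<le> a i / (\<epsilon> * m)" using e m by simp
      have "ennreal (p i * c i powr r) * (\<integral>\<^sup>+x. ennreal (infdist x {0} powr r) \<partial>\<mu>)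
          \<le> ennreal (p i * c i powr r) * ennreal M"
        by (intro mult_left_mono leaf) auto
      also have "\<dots> = ennreal (a i * a i powr (r / l) * M)"
        using pc_pos[OF i] M by (simp add: ennreal_mult pc[OF i])
      also have "\<dots> \<le> ennreal (a i * (M * \<epsilon> powr (r / l)))"
      proof (intro ennreal_leI)
        have "a i powr (r / l) \<le> \<epsilon> powr (r / l)" using False ai r l by (intro powr_mono2) auto
        then show "a i * a i powr (r / l) * M \<le> a i * (M * \<epsilon> powr (r / l))"
          using ai M by (simp add: mult_left_mono mult_right_mono mult.commute mult.left_commute)
      qed
      finally show ?thesis using c1 by blast
    qed
    then have "\<forall>i. \<exists>Bi. i < N \<longrightarrow> finite Bi \<and> Bi \<noteq> {} \<and> real (card Bi) \<le> a i / (\<epsilon> * m) \<and>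
        ennreal (p i * c i powr r) * (\<integral>\<^sup>+x. ennreal (infdist x Bi powr r) \<partial>\<mu>)
          \<le> ennreal (a i * (M * \<epsilon> powr (r / l)))"
      by blast
    from choice[OF this] obtain Bs where Bs0: "\<forall>i. i < N \<longrightarrow> finite (Bs i) \<and> Bs i \<noteq> {} \<and> real (card (Bs i)) \<le> a i / (\<epsilon> * m) \<and>
        ennreal (p i * c i powr r) * (\<integral>\<^sup>+x. ennreal (infdist x (Bs i) powr r) \<partial>\<mu>)
          \<le> ennreal (a i * (M * \<epsilon> powr (r / l)))"
      by blast
    then have Bs: "\<And>i. i < N \<Longrightarrow> finite (Bs i) \<and> Bs i \<noteq> {} \<and> real (card (Bs i)) \<le> a i / (\<epsilon> * m) \<and>
        ennreal (p i * c i powr r) * (\<integral>\<^sup>+x. ennreal (infdist x (Bs i) powr r) \<partial>\<mu>)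
          \<le> ennreal (a i * (M * \<epsilon> powr (r / l)))"
      by blast
    define B where "B = (\<Union>i<N. f i ` Bs i)"
    have finB: "finite B" using Bs by (auto simp: B_def)
    have neB: "B \<noteq> {}" using Bs[of 0] N by (auto simp: B_def)
    have "card B \<le> (\<Sum>i<N. card (f i ` Bs i))" unfolding B_def by (rule card_UN_le) auto
    also have "\<dots> \<le> (\<Sum>i<N. card (Bs i))" by (intro sum_mono card_image_le) (use Bs in auto)
    finally have "real (card B) \<le> (\<Sum>i<N. real (card (Bs i)))" by (metis of_nat_le_iff of_nat_sum)
    also have "\<dots> \<le> (\<Sum>i<N. a i / (\<epsilon> * m))" using Bs by (intro sum_mono) auto
    also have "\<dots> = 1 / (\<epsilon> * m)" by (simp add: sum_divide_distrib[symmetric] a_sum)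
    finally have cardB: "real (card B) \<le> 1 / (\<epsilon> * m)" .
    have "(\<integral>\<^sup>+x. ennreal (infdist x B powr r) \<partial>\<mu>)
      \<le> (\<Sum>i<N. ennreal (p i * c i powr r) * (\<integral>\<^sup>+x. ennreal (infdist x (Bs i) powr r) \<partial>\<mu>))"
      unfolding B_def using Bs by (intro cost r) auto
    also have "\<dots> \<le> (\<Sum>i<N. ennreal (a i * (M * \<epsilon> powr (r / l))))"
      using Bs by (intro sum_mono) auto
    also have "\<dots> = ennreal (\<Sum>i<N. a i * (M * \<epsilon> powr (r / l)))"
      using a_pos M by (intro sum_ennreal mult_nonneg_nonneg) (auto intro: less_imp_le)
    also have "(\<Sum>i<N. a i * (M * \<epsilon> powr (r / l))) = M * \<epsilon> powr (r / l)"
      by (simp add: sum_distrib_right[symmetric] a_sum)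
    finally show ?thesis unfolding Q_def using finB neB cardB by blast
  qed
  have ind: "\<forall>\<epsilon>. q ^ j \<le> \<epsilon> \<and> \<epsilon> \<le> 1 \<longrightarrow> Q \<epsilon>" for j
  proof (induction j)
    case 0
    show ?case
    proof (intro allI impI)
      fix \<epsilon> :: real assume "q ^ 0 \<le> \<epsilon> \<and> \<epsilon> \<le> 1"
      then have e: "\<epsilon> = 1" by simp
      show "Q \<epsilon>"
      proof (rule step)
        show "0 < \<epsilon>" "\<epsilon> \<le> 1" using e by auto
        fix i assume "i < N" "\<epsilon> \<le> a i"
        with a_lt1[of i] e show "Q (\<epsilon> / a i)" by linarith
      qed
    qed
  next
    case (Suc j)
    show ?case
    proof (intro allI impI)
      fix \<epsilon> :: real assume e: "q ^ Suc j \<le> \<epsilon> \<and> \<epsilon> \<le> 1"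
      have e0: "0 < \<epsilon>" using e q by (meson order_less_le_trans zero_less_power)
      show "Q \<epsilon>"
      proof (rule step[OF e0])
        show "\<epsilon> \<le> 1" using e by simp
        fix i assume i: "i < N" and ei: "\<epsilon> \<le> a i"
        have ai: "0 < a i" using a_pos[OF i] .
        have "q ^ j = q ^ Suc j / q" using q by simp
        also have "\<dots> \<le> \<epsilon> / q" using e q by (intro divide_right_mono) auto
        also have "\<dots> \<le> \<epsilon> / a i" using e0 ai qi[OF i] by (intro divide_left_mono) auto
        finally have "q ^ j \<le> \<epsilon> / a i" .
        moreover have "\<epsilon> / a i \<le> 1" using ei ai by simp
        ultimately show "Q (\<epsilon> / a i)" using Suc by blast
      qed
    qed
  qed
  have "\<forall>\<epsilon>. 0 < \<epsilon> \<and> \<epsilon> \<le> 1 \<longrightarrow> Q \<epsilon>"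
  proof (intro allI impI)
    fix \<epsilon> :: real assume e: "0 < \<epsilon> \<and> \<epsilon> \<le> 1"
    obtain j where "q ^ j < \<epsilon>" using real_arch_pow_inv[of \<epsilon> q] e q by auto
    then show "Q \<epsilon>" using ind[of j] e by auto
  qed
  then show ?thesis unfolding Q_def using M m by blast
qed

end


lemma g_lim: "((\<lambda>n::nat. l / (1 - ln K / ln (real n))) \<longlongrightarrow> l) sequentially"
proof -
  have "filterlim (\<lambda>n::nat. ln (real n)) at_top sequentially"
    by (rule filterlim_compose[OF ln_at_top filterlim_real_sequentially])
  then have "((\<lambda>n::nat. ln K / ln (real n)) \<longlongrightarrow> 0) sequentially"
    by (intro tendsto_divide_0[OF tendsto_const] filterlim_at_top_imp_at_infinity)
  then have "((\<lambda>n::nat. l / (1 - ln K / ln (real n))) \<longlongrightarrow> l / (1 - 0)) sequentially"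
    by (intro tendsto_intros) auto
  then show ?thesis by simp
qed

lemma quant_e_nonneg: "0 \<le> quant_e \<mu> r n"
  by (simp add: quant_e_def)

theorem theorem4:
  fixes f :: "nat \<Rightarrow> 'a::euclidean_space \<Rightarrow> 'a"
    and p s c :: "nat \<Rightarrow> real"
    and N :: nat and \<mu> :: "'a measure" and r l :: real
  assumes N: "N \<ge> 2"
    and p_pos: "\<And>i. i < N \<Longrightarrow> p i > 0"
    and p_sum: "(\<Sum>i<N. p i) = 1"
    and sc: "\<And>i. i < N \<Longrightarrow> 0 < s i \<and> s i \<le> c i \<and> c i < 1"
    and bilip: "\<And>i x y. i < N \<Longrightarrow>
        s i * norm (x - y) \<le> norm (f i x - f i y) \<and> norm (f i x - f i y) \<le> c i * norm (x - y)"
    and mu_borel: "sets \<mu> = sets borel"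
    and mu_prob: "prob_space \<mu>"
    and mu_inv: "\<And>A. A \<in> sets borel \<Longrightarrow>
        emeasure \<mu> A = (\<Sum>i<N. ennreal (p i) * emeasure \<mu> (f i -` A))"
    and r: "0 < r"
    and l: "0 < l"
    and l_eq: "(\<Sum>i<N. (p i * c i powr r) powr (l / (r + l))) = 1"
  shows "limsup (\<lambda>n. ereal (real n * quant_e \<mu> r n powr l)) < \<infinity> \<and>
         upper_quant_dim \<mu> r \<le> ereal l"
proof -
  have c': "\<And>i. i < N \<Longrightarrow> 0 < c i \<and> c i < 1" using sc by (meson order_less_le_trans)
  have lip': "\<And>i x y. i < N \<Longrightarrow> norm (f i x - f i y) \<le> c i * norm (x - y)" using bilip by blast
  interpret I: ifs f p c N \<mu>
    by (rule ifs.intro[OF N p_pos p_sum c' lip' mu_borel mu_prob mu_inv])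
  obtain M m where M: "0 \<le> M" and m: "0 < m" and cov: "\<And>\<epsilon>. 0 < \<epsilon> \<Longrightarrow> \<epsilon> \<le> 1 \<Longrightarrow> (\<exists>B. finite B \<and> B \<noteq> {} \<and>
      real (card B) \<le> 1 / (\<epsilon> * m) \<and>
      (\<integral>\<^sup>+x. ennreal (infdist x B powr r) \<partial>\<mu>) \<le> ennreal (M * \<epsilon> powr (r / l)))"
    using I.covering[OF r l l_eq] by blast
  define K where "K = M powr (l / r) / m"
  have bound: "real n * quant_e \<mu> r n powr l \<le> K" if n: "1 / m \<le> real n" for n
  proof -
    have n0: "0 < real n" using n m by (meson divide_pos_pos order_less_le_trans zero_less_one)
    define \<epsilon> where "\<epsilon> = 1 / (real n * m)"
    have e0: "0 < \<epsilon>" using n0 m by (simp add: \<epsilon>_def)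
    have e1: "\<epsilon> \<le> 1" using n m by (simp add: \<epsilon>_def field_simps)
    obtain B where B: "finite B" "B \<noteq> {}" "real (card B) \<le> 1 / (\<epsilon> * m)"
      "(\<integral>\<^sup>+x. ennreal (infdist x B powr r) \<partial>\<mu>) \<le> ennreal (M * \<epsilon> powr (r / l))"
      using cov[OF e0 e1] by blast
    have "1 / (\<epsilon> * m) = real n" using n0 m by (simp add: \<epsilon>_def)
    then have cB: "card B \<le> n" using B(3) by simp
    have "quant_V \<mu> r n \<le> (\<integral>\<^sup>+x. ennreal (infdist x B powr r) \<partial>\<mu>)"
      unfolding quant_V_def by (rule INF_lower) (use B cB in auto)
    also have "\<dots> \<le> ennreal (M * \<epsilon> powr (r / l))" by (rule B(4))
    finally have E: "enn2real (quant_V \<mu> r n) \<le> M * \<epsilon> powr (r / l)"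
      using M by (intro enn2real_leI) auto
    have "quant_e \<mu> r n powr l = enn2real (quant_V \<mu> r n) powr (l / r)"
      unfolding quant_e_def by (simp add: powr_powr)
    also have "\<dots> \<le> (M * \<epsilon> powr (r / l)) powr (l / r)"
      using E r l by (intro powr_mono2) auto
    also have "\<dots> = M powr (l / r) * \<epsilon>"
      using M e0 r l by (simp add: powr_mult powr_powr)
    finally have "real n * quant_e \<mu> r n powr l \<le> real n * (M powr (l / r) * \<epsilon>)"
      using n0 by (intro mult_left_mono) auto
    also have "\<dots> = K" using n0 m by (simp add: K_def \<epsilon>_def)
    finally show ?thesis .
  qed
  have ev: "eventually (\<lambda>n. 1 / m \<le> real n) sequentially"
    by (rule eventually_sequentiallyI[of "nat \<lceil>1 / m\<rceil>"]) linarith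
  have part1: "limsup (\<lambda>n. ereal (real n * quant_e \<mu> r n powr l)) < \<infinity>"
  proof -
    have "limsup (\<lambda>n. ereal (real n * quant_e \<mu> r n powr l)) \<le> ereal K"
      by (rule Limsup_bounded) (use ev bound in \<open>auto elim: eventually_mono\<close>)
    then show ?thesis using order.strict_trans1 by fastforce
  qed
  define K' where "K' = max K 1"
  have K': "1 \<le> K'" "K \<le> K'" by (auto simp: K'_def)
  define g where "g n = l / (1 - ln K' / ln (real n))" for n :: nat
  have ev2: "eventually (\<lambda>n. 1 / m \<le> real n \<and> K' < real n) sequentially"
    using ev by (rule eventually_conj) (rule eventually_sequentiallyI[of "nat \<lceil>K'\<rceil> + 1"], linarith)
  have ratio: "ereal (ln (real n) / (- ln (quant_e \<mu> r n))) \<le> ereal (g n)"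
    if n: "1 / m \<le> real n" "K' < real n" for n
  proof -
    have n1: "1 < real n" using n K' by linarith
    have lnn: "0 < ln (real n)" using n1 by simp
    have lnK: "0 \<le> ln K'" "ln K' < ln (real n)" using K' n by auto
    have D: "0 < ln (real n) - ln K'" using lnK by simp
    have g_eq: "g n = l * ln (real n) / (ln (real n) - ln K')"
      unfolding g_def using lnn D by (simp add: field_simps)
    have g0: "0 \<le> g n" unfolding g_eq using l lnn D by simp
    define e where "e = quant_e \<mu> r n"
    have e0: "0 \<le> e" by (simp add: e_def quant_e_nonneg)
    show ?thesis
    proof (cases "e = 0")
      case True
      then show ?thesis using g0 by (simp add: e_def[symmetric])
    next
      case False
      then have ep: "0 < e" using e0 by simp
      have "real n * e powr l \<le> K'" using bound[OF n(1)] K' by (simp add: e_def)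
      then have "e powr l \<le> K' / real n" using n1 by (simp add: field_simps)
      then have "ln (e powr l) \<le> ln (K' / real n)" using ep n1 K' by (subst ln_le_cancel_iff) auto
      then have "l * ln e \<le> ln K' - ln (real n)" using ep n1 K' by (simp add: ln_powr ln_div)
      then have le: "(ln (real n) - ln K') / l \<le> - ln e" using l by (simp add: field_simps)
      have "ln (real n) / (- ln e) \<le> ln (real n) / ((ln (real n) - ln K') / l)"
      proof (rule divide_left_mono[OF le])
        have Dl: "0 < (ln (real n) - ln K') / l" using D l by simp
        then have "0 < - ln e" using le by linarith
        then show "0 < - ln e * ((ln (real n) - ln K') / l)" using Dl by (rule mult_pos_pos)
        show "0 \<le> ln (real n)" using lnn by simp
      qed
      also have "\<dots> = g n" unfolding g_eq by simp
      finally show ?thesis by (simp add: e_def)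
    qed
  qed
  have "upper_quant_dim \<mu> r \<le> limsup (\<lambda>n. ereal (g n))"
    unfolding upper_quant_dim_def
    by (rule Limsup_mono) (use ev2 ratio in \<open>auto elim: eventually_mono\<close>)
  also have "limsup (\<lambda>n. ereal (g n)) = ereal l"
    by (rule lim_imp_Limsup) (auto simp: g_def lim_ereal intro: g_lim)
  finally show ?thesis using part1 by simp
qed

end
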